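(* For every choice of environment function $Env()$, ESAdapt under the reward function $Rew_{\#comp}()$ is unsolvable: there is no algorithm (Turing machine), regardless of running time or memory, that produces the correct output for every instance.
   Context: Model. Let $X=\{x_1,\dots,x_{|X|}\}$ be Boolean variables and $O$ a finite output set. Software system requirements are a finite set $R$ of pairs $(i,o)$, where $i$ is a truth assignment to $X$ and $o\in O$. Interfaces and components follow the Dana runtime component model: an interface is a set of function prototypes (function name, return type, parameter types) together with a set of typed transfer fields; a component provides one or more interfaces and requires zero or more interfaces, and contains code (in a Dana-like imperative language with assignments, conditionals, loops, arrays, function calls and an output statement; this language can simulate any Turing machine) implementing every function of its provided interfaces; this code may call functions and use transfer fields of its required interfaces. $L_{int}$ and $L_{comp}$ are finite libraries of interfaces and components. Given a base component $c\in L_{comp}$ implementing a function main, a valid component-based software system $S$ based on $c$ is obtained by choosing, for each required interface of $c$, a component of $L_{comp}$ providing it, and recursively for each required interface of every chosen component; separate copies of a component are used for separate required-interface occurrences, and when a component providing several interfaces implements one of them, only a reduced copy containing that interface's code is used. Its component wiring tree has root $c$, vertices the chosen component copies, arcs labelled by the implemented interfaces; no component label may occur twice on a root-to-leaf path. $S$ is working relative to $R$ if for every $(i,o)\in R$, running $S$ on input $i$ outputs $o$. An environment function $Env()$ maps a system to events/metric values and is computable in polynomial time. $Rew_{\#comp}(S)$ is the number of components in $S$. Problem ESAdapt under $Rew_{\#comp}()$: Input: $R$, $L_{int}$, $L_{comp}$, a working system $S$ based on a component $c\in L_{comp}$ relative to $R$, $L_{int}$, $L_{comp}$, and $Env()$.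 Output: a working system $S'$ based on $c$ relative to $L_{int},L_{comp},R$ having the smallest value of $Rew_{\#comp}(S')$ over all working systems based on $c$ relative to $L_{int},L_{comp},R$. *)

theory Defs
  imports Main "HOL-Library.Nat_Bijection"
begin

section \<open>A Dana-like imperative language\<close>

text \<open>All names (variables, arrays, functions, interfaces, components, types)
are natural numbers; all values are natural numbers.\<close>

datatype aexp = N nat | V nat | Plus aexp aexp | Minus aexp aexp | Times aexp aexp
  | Div aexp aexp | Mod aexp aexp | Arr nat aexp

datatype bexp = BC bool | Not bexp | And bexp bexp | Less aexp aexp | Eq aexp aexp

text \<open>Call x I f args: call function f of (required) interface I with
arguments args and store the returned value in variable x.  Out a: output statement.\<close>
datatype com = Skip | Assign nat aexp | ArrAssign nat aexp aexp | Seq com com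
  | If bexp com com | While bexp com | Call nat nat nat "aexp list" | Out aexp

type_synonym state = "(nat \<Rightarrow> nat) \<times> (nat \<Rightarrow> nat \<Rightarrow> nat)"

fun aval :: "aexp \<Rightarrow> state \<Rightarrow> nat" where
  "aval (N n) s = n"
| "aval (V x) s = fst s x"
| "aval (Plus a b) s = aval a s + aval b s"
| "aval (Minus a b) s = aval a s - aval b s"
| "aval (Times a b) s = aval a s * aval b s"
| "aval (Div a b) s = aval a s div aval b s"
| "aval (Mod a b) s = aval a s mod aval b s"
| "aval (Arr x i) s = snd s x (aval i s)"

fun bval :: "bexp \<Rightarrow> state \<Rightarrow> bool" where
  "bval (BC b) s = b"
| "bval (Not b) s = (\<not> bval b s)"
| "bval (And a b) s = (bval a s \<and> bval b s)"
| "bval (Less a b) s = (aval a s < aval b s)"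
| "bval (Eq a b) s = (aval a s = aval b s)"

section \<open>Interfaces, components, wiring trees\<close>

text \<open>An interface: name, function prototypes (function name, return type,
parameter types), typed transfer fields (field name, type).\<close>
datatype iface = Iface (iname: nat) (protos: "(nat \<times> nat \<times> nat list) list")
  (tfields: "(nat \<times> nat) list")

text \<open>An implementation of a function: parameter variables, body, returned expression.\<close>
type_synonym fimpl = "nat list \<times> com \<times> aexp"

text \<open>A component: name, provided interfaces, required interfaces, code
(implementation for each (interface, function name) pair).\<close>
datatype component = Comp (cname: nat) (prov: "nat list") (req: "nat list")
  (code: "((nat \<times> nat) \<times> fimpl) list")

text \<open>Component wiring tree: a vertex labelled by a component name, with arcs
labelled by the interface implemented by the child.\<close>
datatype wtree = WNode nat "(nat \<times> wtree) list"

fun root_label :: "wtree \<Rightarrow> nat" where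
  "root_label (WNode k ch) = k"

definition iface_of :: "iface list \<Rightarrow> nat \<Rightarrow> iface option" where
  "iface_of Li n = find (\<lambda>I. iname I = n) Li"

definition comp_of :: "component list \<Rightarrow> nat \<Rightarrow> component option" where
  "comp_of Lc k = find (\<lambda>C. cname C = k) Lc"

definition init_call :: "nat list \<Rightarrow> nat list \<Rightarrow> state" where
  "init_call ps vs = ((\<lambda>x. case map_of (zip ps vs) x of Some v \<Rightarrow> v | None \<Rightarrow> 0), (\<lambda>_ _. 0))"

definition setvar :: "state \<Rightarrow> nat \<Rightarrow> nat \<Rightarrow> state" where
  "setvar s x v = ((fst s)(x := v), snd s)"

definition setarr :: "state \<Rightarrow> nat \<Rightarrow> nat \<Rightarrow> nat \<Rightarrow> state" where
  "setarr s x i v = (fst s, (snd s)(x := (snd s x)(i := v)))"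

text \<open>Big-step semantics with output trace and step count.
exec L ch c s s' os n: in component library L, executing command c in a component
copy whose required interfaces are wired to the subtrees ch, from state s,
terminates in state s' producing outputs os in n steps.\<close>
inductive exec :: "component list \<Rightarrow> (nat \<times> wtree) list \<Rightarrow> com \<Rightarrow> state \<Rightarrow> state
    \<Rightarrow> nat list \<Rightarrow> nat \<Rightarrow> bool" for L where
  Skip: "exec L ch Skip s s [] 1"
| Assign: "exec L ch (Assign x a) s (setvar s x (aval a s)) [] 1"
| ArrAssign: "exec L ch (ArrAssign x i a) s (setarr s x (aval i s) (aval a s)) [] 1"
| Seq: "exec L ch c1 s s1 o1 n1 \<Longrightarrow> exec L ch c2 s1 s2 o2 n2
    \<Longrightarrow> exec L ch (Seq c1 c2) s s2 (o1 @ o2) (n1 + n2 + 1)"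
| IfT: "bval b s \<Longrightarrow> exec L ch c1 s s' os n \<Longrightarrow> exec L ch (If b c1 c2) s s' os (n + 1)"
| IfF: "\<not> bval b s \<Longrightarrow> exec L ch c2 s s' os n \<Longrightarrow> exec L ch (If b c1 c2) s s' os (n + 1)"
| WhileF: "\<not> bval b s \<Longrightarrow> exec L ch (While b c) s s [] 1"
| WhileT: "bval b s \<Longrightarrow> exec L ch c s s1 o1 n1 \<Longrightarrow> exec L ch (While b c) s1 s2 o2 n2
    \<Longrightarrow> exec L ch (While b c) s s2 (o1 @ o2) (n1 + n2 + 1)"
| Out: "exec L ch (Out a) s s [aval a s] 1"
| Call: "map_of ch I = Some (WNode k ch') \<Longrightarrow> comp_of L k = Some C
    \<Longrightarrow> map_of (code C) (I, f) = Some (ps, body, r) \<Longrightarrow> length ps = length args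
    \<Longrightarrow> exec L ch' body (init_call ps (map (\<lambda>a. aval a s) args)) s1 os n
    \<Longrightarrow> exec L ch (Call x I f args) s (setvar s x (aval r s1)) os (n + 1)"

fun calls :: "com \<Rightarrow> (nat \<times> nat \<times> nat) list" where
  "calls (Call x I f args) = [(I, f, length args)]"
| "calls (Seq c1 c2) = calls c1 @ calls c2"
| "calls (If b c1 c2) = calls c1 @ calls c2"
| "calls (While b c) = calls c"
| "calls _ = []"

definition wf_iface :: "iface \<Rightarrow> bool" where
  "wf_iface I \<longleftrightarrow> distinct (map fst (protos I)) \<and> distinct (map fst (tfields I))"

definition wf_comp :: "iface list \<Rightarrow> component \<Rightarrow> bool" where
  "wf_comp Li C \<longleftrightarrow>
     prov C \<noteq> [] \<and> distinct (prov C) \<and> distinct (req C)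
   \<and> set (prov C) \<union> set (req C) \<subseteq> iname ` set Li
   \<and> distinct (map fst (code C))
   \<and> (\<forall>I \<in> set (prov C). \<forall>D. iface_of Li I = Some D \<longrightarrow>
        (\<forall>(f, rt, pts) \<in> set (protos D). \<exists>ps b r.
           map_of (code C) (I, f) = Some (ps, b, r) \<and> length ps = length pts \<and> distinct ps))
   \<and> (\<forall>((I, f), (ps, b, r)) \<in> set (code C).
        I \<in> set (prov C) \<and> (\<exists>D. iface_of Li I = Some D \<and> f \<in> fst ` set (protos D))
      \<and> (\<forall>(J, g, m) \<in> set (calls b). J \<in> set (req C) \<and>
           (\<exists>D. iface_of Li J = Some D \<and> (\<exists>rt pts. (g, rt, pts) \<in> set (protos D) \<and> length pts = m))))"

definition wf_libs :: "iface list \<Rightarrow> component list \<Rightarrow> bool" where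
  "wf_libs Li Lc \<longleftrightarrow> distinct (map iname Li) \<and> (\<forall>I \<in> set Li. wf_iface I)
     \<and> distinct (map cname Lc) \<and> (\<forall>C \<in> set Lc. wf_comp Li C)"

definition main_fn :: nat where "main_fn = 0"

text \<open>Component c of Lc implements main (in exactly one of its provided
interfaces), taking one argument per Boolean variable.\<close>
definition main_ok :: "iface list \<Rightarrow> component list \<Rightarrow> nat \<Rightarrow> nat \<Rightarrow> bool" where
  "main_ok Li Lc c nX \<longleftrightarrow> (\<exists>C. comp_of Lc c = Some C \<and>
     (\<exists>!I. I \<in> set (prov C) \<and> (\<exists>D. iface_of Li I = Some D \<and> main_fn \<in> fst ` set (protos D))) \<and>
     (\<forall>I \<in> set (prov C). \<forall>D. iface_of Li I = Some D \<longrightarrow>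
        (\<forall>rt pts. (main_fn, rt, pts) \<in> set (protos D) \<longrightarrow> length pts = nX)))"

text \<open>wired Lc p t: every vertex of t is labelled by a component of Lc whose
required interfaces are exactly the arc labels to its children (in order), each child
provides the interface labelling its arc, and no component label repeats on a path
(p is the list of labels strictly above the root of t).\<close>
inductive wired :: "component list \<Rightarrow> nat list \<Rightarrow> wtree \<Rightarrow> bool" for Lc where
  "k \<notin> set p \<Longrightarrow> comp_of Lc k = Some C \<Longrightarrow> map fst ch = req C \<Longrightarrow>
   (\<forall>J t'. (J, t') \<in> set ch \<longrightarrow> wired Lc (k # p) t' \<and>
      (\<exists>C'. comp_of Lc (root_label t') = Some C' \<and> J \<in> set (prov C'))) \<Longrightarrow>
   wired Lc p (WNode k ch)"

definition valid_sys :: "component list \<Rightarrow> nat \<Rightarrow> wtree \<Rightarrow> bool" where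
  "valid_sys Lc c t \<longleftrightarrow> wired Lc [] t \<and> root_label t = c"

definition run :: "component list \<Rightarrow> wtree \<Rightarrow> bool list \<Rightarrow> nat list \<Rightarrow> bool" where
  "run Lc t i os \<longleftrightarrow> (\<exists>k ch C I ps body r s' n. t = WNode k ch \<and> comp_of Lc k = Some C \<and>
     I \<in> set (prov C) \<and> map_of (code C) (I, main_fn) = Some (ps, body, r) \<and>
     length ps = length i \<and>
     exec Lc ch body (init_call ps (map of_bool i)) s' os n)"

definition working :: "component list \<Rightarrow> (bool list \<times> nat) list \<Rightarrow> wtree \<Rightarrow> bool" where
  "working Lc R t \<longleftrightarrow> (\<forall>(i, out) \<in> set R. run Lc t i [out])"

text \<open>Rew_#comp: the number of component copies (vertices) in the system.\<close>
fun ncomp :: "wtree \<Rightarrow> nat" where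
  "ncomp (WNode k ch) = 1 + sum_list (map (\<lambda>(J, t). ncomp t) ch)"

fun enc_aexp :: "aexp \<Rightarrow> nat" where
  "enc_aexp (N n) = prod_encode (0, n)"
| "enc_aexp (V x) = prod_encode (1, x)"
| "enc_aexp (Plus a b) = prod_encode (2, prod_encode (enc_aexp a, enc_aexp b))"
| "enc_aexp (Minus a b) = prod_encode (3, prod_encode (enc_aexp a, enc_aexp b))"
| "enc_aexp (Times a b) = prod_encode (4, prod_encode (enc_aexp a, enc_aexp b))"
| "enc_aexp (Div a b) = prod_encode (5, prod_encode (enc_aexp a, enc_aexp b))"
| "enc_aexp (Mod a b) = prod_encode (6, prod_encode (enc_aexp a, enc_aexp b))"
| "enc_aexp (Arr x i) = prod_encode (7, prod_encode (x, enc_aexp i))"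

fun enc_bexp :: "bexp \<Rightarrow> nat" where
  "enc_bexp (BC b) = prod_encode (0, of_bool b)"
| "enc_bexp (Not b) = prod_encode (1, enc_bexp b)"
| "enc_bexp (And a b) = prod_encode (2, prod_encode (enc_bexp a, enc_bexp b))"
| "enc_bexp (Less a b) = prod_encode (3, prod_encode (enc_aexp a, enc_aexp b))"
| "enc_bexp (Eq a b) = prod_encode (4, prod_encode (enc_aexp a, enc_aexp b))"

fun enc_com :: "com \<Rightarrow> nat" where
  "enc_com Skip = prod_encode (0, 0)"
| "enc_com (Assign x a) = prod_encode (1, prod_encode (x, enc_aexp a))"
| "enc_com (ArrAssign x i a) = prod_encode (2, list_encode [x, enc_aexp i, enc_aexp a])"
| "enc_com (Seq c1 c2) = prod_encode (3, prod_encode (enc_com c1, enc_com c2))"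
| "enc_com (If b c1 c2) = prod_encode (4, list_encode [enc_bexp b, enc_com c1, enc_com c2])"
| "enc_com (While b c) = prod_encode (5, prod_encode (enc_bexp b, enc_com c))"
| "enc_com (Call x I f args) = prod_encode (6, list_encode [x, I, f, list_encode (map enc_aexp args)])"
| "enc_com (Out a) = prod_encode (7, enc_aexp a)"

definition enc_iface :: "iface \<Rightarrow> nat" where
  "enc_iface I = list_encode [iname I,
     list_encode (map (\<lambda>(f, rt, pts). list_encode [f, rt, list_encode pts]) (protos I)),
     list_encode (map prod_encode (tfields I))]"

definition enc_component :: "component \<Rightarrow> nat" where
  "enc_component C = list_encode [cname C, list_encode (prov C), list_encode (req C),
     list_encode (map (\<lambda>((I, f), (ps, b, r)).
        list_encode [I, f, list_encode ps, enc_com b, enc_aexp r]) (code C))]"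

fun enc_tree :: "wtree \<Rightarrow> nat" where
  "enc_tree (WNode k ch) = prod_encode (k, list_encode (map (\<lambda>(J, t). prod_encode (J, enc_tree t)) ch))"

definition enc_reqs :: "(bool list \<times> nat) list \<Rightarrow> nat" where
  "enc_reqs R = list_encode (map (\<lambda>(i, out). prod_encode (list_encode (map of_bool i), out)) R)"

text \<open>An algorithm is a program of the (Turing-complete) language above that makes no
interface calls: it gets its input in variable 0 and delivers its output in variable 1.\<close>
definition alg_init :: "nat \<Rightarrow> state" where
  "alg_init x = ((\<lambda>_. 0)(0 := x), (\<lambda>_ _. 0))"

definition alg_runs :: "com \<Rightarrow> nat \<Rightarrow> nat \<Rightarrow> nat \<Rightarrow> bool" where
  "alg_runs p x y n \<longleftrightarrow> (\<exists>s' os. exec [] [] p (alg_init x) s' os n \<and> fst s' 1 = y)"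

text \<open>Env maps a system to a list of event/metric values; p computes Env in time
polynomial in the size of the system.\<close>
definition env_computes_poly :: "com \<Rightarrow> (wtree \<Rightarrow> nat list) \<Rightarrow> bool" where
  "env_computes_poly p Env \<longleftrightarrow> (\<exists>a d. \<forall>t. \<exists>n.
      alg_runs p (enc_tree t) (list_encode (Env t)) n \<and> n \<le> a * (size t + 1) ^ d)"

definition env_polytime :: "(wtree \<Rightarrow> nat list) \<Rightarrow> bool" where
  "env_polytime Env \<longleftrightarrow> (\<exists>p. env_computes_poly p Env)"

section \<open>The problem ESAdapt under Rew_#comp\<close>

text \<open>An instance: number |X| of Boolean variables, requirements R, L_int, L_comp,
base component c, the given system S, and a program computing Env.\<close>
datatype es_instance = Inst (nX: nat) (reqs: "(bool list \<times> nat) list") (lint: "iface list")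
  (lcomp: "component list") (base: nat) (sys: wtree) (envp: com)

definition enc_inst :: "es_instance \<Rightarrow> nat" where
  "enc_inst x = list_encode [nX x, enc_reqs (reqs x), list_encode (map enc_iface (lint x)),
     list_encode (map enc_component (lcomp x)), base x, enc_tree (sys x), enc_com (envp x)]"

definition valid_inst :: "(wtree \<Rightarrow> nat list) \<Rightarrow> es_instance \<Rightarrow> bool" where
  "valid_inst Env x \<longleftrightarrow> wf_libs (lint x) (lcomp x) \<and> main_ok (lint x) (lcomp x) (base x) (nX x)
     \<and> (\<forall>(i, out) \<in> set (reqs x). length i = nX x)
     \<and> valid_sys (lcomp x) (base x) (sys x) \<and> working (lcomp x) (reqs x) (sys x)
     \<and> env_computes_poly (envp x) Env"

text \<open>Correct outputs: working systems based on c with minimum Rew_#comp.\<close>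
definition optimal_ncomp :: "es_instance \<Rightarrow> wtree \<Rightarrow> bool" where
  "optimal_ncomp x t \<longleftrightarrow> valid_sys (lcomp x) (base x) t \<and> working (lcomp x) (reqs x) t \<and>
     (\<forall>t'. valid_sys (lcomp x) (base x) t' \<and> working (lcomp x) (reqs x) t' \<longrightarrow> ncomp t \<le> ncomp t')"

definition ESAdapt_ncomp_solvable :: "(wtree \<Rightarrow> nat list) \<Rightarrow> bool" where
  "ESAdapt_ncomp_solvable Env \<longleftrightarrow> (\<exists>p. \<forall>x. valid_inst Env x \<longrightarrow>
     (\<exists>n t. alg_runs p (enc_inst x) (enc_tree t) n \<and> optimal_ncomp x t))"

end

theory Submission
  imports Defs
begin

definition pe_exp :: "aexp \<Rightarrow> aexp \<Rightarrow> aexp" where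
  "pe_exp a b = Plus (Div (Times (Plus a b) (Plus (Plus a b) (N 1))) (N 2)) a"

lemma aval_pe_exp[simp]: "aval (pe_exp a b) s = prod_encode (aval a s, aval b s)"
  by (simp add: pe_exp_def prod_encode_def triangle_def)

fun lenc :: "aexp list \<Rightarrow> aexp" where
  "lenc [] = N 0"
| "lenc (a # as) = Plus (pe_exp a (lenc as)) (N 1)"

lemma aval_lenc[simp]: "aval (lenc as) s = list_encode (map (\<lambda>a. aval a s) as)"
  by (induction as) auto

fun strip :: "com \<Rightarrow> com" where
  "strip (Seq a b) = Seq (strip a) (strip b)"
| "strip (If b c1 c2) = If b (strip c1) (strip c2)"
| "strip (While b c) = While b (strip c)"
| "strip (Out a) = Skip"
| "strip (Call x I f args) = Skip"
| "strip c = c"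

lemma calls_strip[simp]: "calls (strip c) = []"
  by (induction c) auto

lemma exec_strip:
  "exec L0 ch0 c s s' os n \<Longrightarrow> ch0 = [] \<Longrightarrow> exec L [] (strip c) s s' [] n"
proof (induction rule: exec.induct)
  case (Skip ch s)
  then show ?case by (auto intro: exec.intros exec.intros[simplified])
next
  case (Assign ch x a s)
  then show ?case by (auto intro: exec.intros exec.intros[simplified])
next
  case (ArrAssign ch x i a s)
  then show ?case by (auto intro: exec.intros exec.intros[simplified])
next
  case (Seq ch c1 s s1 o1 n1 c2 s2 o2 n2)
  then show ?case using exec.Seq[of L "[]" "strip c1" s s1 "[]" n1 "strip c2" s2 "[]" n2] by simp
next
  case (IfT b s ch c1 s' os n c2)
  then show ?case by (auto intro: exec.intros exec.intros[simplified])
next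
  case (IfF b s ch c2 s' os n c1)
  then show ?case by (auto intro: exec.intros exec.intros[simplified])
next
  case (WhileF b s ch c)
  then show ?case by (auto intro: exec.intros exec.intros[simplified])
next
  case (WhileT b s ch c s1 o1 n1 s2 o2 n2)
  then show ?case using exec.WhileT[of b s L "[]" "strip c" s1 "[]" n1 s2 "[]" n2] by simp
next
  case (Out ch a s)
  then show ?case using exec.Skip[of L "[]" s] by simp
next
  case (Call ch I k ch' C f ps args body s s1 os n x)
  then show ?case by simp
qed

lemma exec_det:
  "exec L ch c s s1 o1 n1 \<Longrightarrow> exec L ch c s s2 o2 n2 \<Longrightarrow> s1 = s2 \<and> o1 = o2 \<and> n1 = n2"
proof (induction arbitrary: s2 o2 n2 rule: exec.induct)
  case (Seq ch c1 s s1 o1 n1 c2 s2' o2' n2')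
  from Seq.prems show ?case
    by (cases rule: exec.cases) (use Seq.IH in fastforce)+
next
  case (WhileT b s ch c s1 o1 n1 s2' o2' n2')
  from WhileT.prems show ?case
    by (cases rule: exec.cases) (use WhileT in fastforce)+
next
  case (IfT b s ch c1 s' os n c2)
  from IfT.prems show ?case
    by (cases rule: exec.cases) (use IfT in fastforce)+
next
  case (IfF b s ch c2 s' os n c1)
  from IfF.prems show ?case
    by (cases rule: exec.cases) (use IfF in fastforce)+
next
  case (Call ch I k ch' C f ps args body s s1 os n x)
  from Call.prems show ?case
    by (cases rule: exec.cases) (use Call in fastforce)+
qed (erule exec.cases; auto)+

lemma exec_loop: "exec L ch c s s' os n \<Longrightarrow> c = While (BC True) d \<Longrightarrow> False"
  by (induction rule: exec.induct) auto


section \<open>The diagonal instance\<close>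

definition Li0 :: "iface list" where
  "Li0 = [Iface 0 [(0,0,[])] [], Iface 1 [(1,0,[])] [], Iface 2 [(1,0,[])] []]"

definition Cc :: component where
  "Cc = Comp 0 [0] [1] [((0,0), ([], Seq (Call 5 1 1 []) (Out (N 0)), N 0))]"

definition D1 :: component where
  "D1 = Comp 1 [1] [2] [((1,1), ([], Skip, N 0))]"

definition D3 :: component where
  "D3 = Comp 3 [2] [] [((2,1), ([], Skip, N 0))]"

definition R0 :: "(bool list \<times> nat) list" where "R0 = [([], 0)]"

definition t1 :: wtree where "t1 = WNode 0 [(1, WNode 1 [(2, WNode 3 [])])]"
definition t2 :: wtree where "t2 = WNode 0 [(1, WNode 2 [])]"

definition WE :: aexp where
  "WE = pe_exp (N 3) (pe_exp (pe_exp (N 1) (pe_exp (N 0) (pe_exp (N 0) (V 0)))) (V 0))"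

definition D2exp :: aexp where
  "D2exp = lenc [N 2, N (list_encode [1]), N (list_encode []),
     lenc [lenc [N 1, N 1, N (list_encode []), WE, N (enc_aexp (N 0))]]]"

definition FE :: "com \<Rightarrow> aexp" where
  "FE pe = lenc [N 0, N (enc_reqs R0), N (list_encode (map enc_iface Li0)),
     lenc [N (enc_component Cc), N (enc_component D1), D2exp, N (enc_component D3)],
     N 0, N (enc_tree t1), N (enc_com pe)]"

definition B :: "com \<Rightarrow> com \<Rightarrow> com" where
  "B p pe = Seq (Assign 0 (FE pe)) (Seq (strip p) (If (Eq (V 1) (N (enc_tree t2))) (While (BC True) Skip) Skip))"

definition body2 :: "com \<Rightarrow> com \<Rightarrow> com" where
  "body2 p pe = Seq (Assign 0 (N (enc_com (B p pe)))) (B p pe)"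

definition D2 :: "com \<Rightarrow> com \<Rightarrow> component" where
  "D2 p pe = Comp 2 [1] [] [((1,1), ([], body2 p pe, N 0))]"

definition Lc0 :: "com \<Rightarrow> com \<Rightarrow> component list" where
  "Lc0 p pe = [Cc, D1, D2 p pe, D3]"

definition X :: "com \<Rightarrow> com \<Rightarrow> es_instance" where
  "X p pe = Inst 0 R0 Li0 (Lc0 p pe) 0 t1 pe"

lemma enc_seq_assign: "enc_com (Seq (Assign 0 (N k)) b) =
   prod_encode (3, prod_encode (prod_encode (1, prod_encode (0, prod_encode (0, k))), enc_com b))"
  by simp

lemma quine: "aval (FE pe) (setvar s 0 (enc_com (B p pe))) = enc_inst (X p pe)"
proof -
  have "enc_com (body2 p pe) = aval WE (setvar s 0 (enc_com (B p pe)))"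
    unfolding body2_def by (simp add: WE_def setvar_def)
  then show ?thesis
    by (simp add: FE_def X_def enc_inst_def Lc0_def D2_def D2exp_def enc_component_def)
qed



lemma comp_of_Lc0_0[simp]: "comp_of (Lc0 p pe) 0 = Some Cc"
  and comp_of_Lc0_1[simp]: "comp_of (Lc0 p pe) 1 = Some D1"
  and comp_of_Lc0_1'[simp]: "comp_of (Lc0 p pe) (Suc 0) = Some D1"
  and comp_of_Lc0_2[simp]: "comp_of (Lc0 p pe) 2 = Some (D2 p pe)"
  and comp_of_Lc0_3[simp]: "comp_of (Lc0 p pe) 3 = Some D3"
  by (simp_all add: comp_of_def Lc0_def Cc_def D1_def D2_def D3_def)

lemma comp_of_Lc0_Some: "C \<in> set (Lc0 p pe) \<and> cname C = k" if "comp_of (Lc0 p pe) k = Some C"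
proof -
  have "\<And>xs. find (\<lambda>C. cname C = k) xs = Some C \<Longrightarrow> C \<in> set xs \<and> cname C = k"
    subgoal for xs by (induction xs) (auto split: if_splits)
    done
  then show ?thesis using that unfolding comp_of_def by blast
qed

lemma iface_of_Li0_0[simp]: "iface_of Li0 0 = Some (Iface 0 [(0,0,[])] [])"
  and iface_of_Li0_1[simp]: "iface_of Li0 1 = Some (Iface 1 [(1,0,[])] [])"
  and iface_of_Li0_1'[simp]: "iface_of Li0 (Suc 0) = Some (Iface 1 [(1,0,[])] [])"
  and iface_of_Li0_2[simp]: "iface_of Li0 2 = Some (Iface 2 [(1,0,[])] [])"
  by (simp_all add: iface_of_def Li0_def)

lemma names_Li0[simp]: "iname ` set Li0 = {0,1,2}"
  by (simp add: Li0_def)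

lemma calls_body2[simp]: "calls (body2 p pe) = []"
  by (simp add: body2_def B_def)

lemma wf_libs0: "wf_libs Li0 (Lc0 p pe)"
proof -
  have "wf_comp Li0 Cc" unfolding wf_comp_def Cc_def by (simp add: main_fn_def)
  moreover have "wf_comp Li0 D1" unfolding wf_comp_def D1_def by simp
  moreover have "wf_comp Li0 (D2 p pe)" unfolding wf_comp_def D2_def by simp
  moreover have "wf_comp Li0 D3" unfolding wf_comp_def D3_def by simp
  moreover have "distinct (map iname Li0) \<and> (\<forall>I \<in> set Li0. wf_iface I)"
    by (simp add: Li0_def wf_iface_def)
  ultimately show ?thesis unfolding wf_libs_def
    by (simp add: Lc0_def Cc_def D1_def D2_def D3_def)
qed

lemma main_ok0: "main_ok Li0 (Lc0 p pe) 0 0"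
  unfolding main_ok_def
  by (auto simp add: Cc_def main_fn_def)

lemma wired_t1: "valid_sys (Lc0 p pe) 0 t1"
  unfolding valid_sys_def t1_def
  by (rule conjI, rule wired.intros, auto intro!: wired.intros simp: Cc_def D1_def D3_def)

lemma wired_t2: "valid_sys (Lc0 p pe) 0 t2"
  unfolding valid_sys_def t2_def
  by (rule conjI, rule wired.intros, auto intro!: wired.intros simp: Cc_def D2_def)

lemma working_t1: "working (Lc0 p pe) R0 t1"
proof -
  let ?L = "Lc0 p pe" and ?ch = "[(1::nat, WNode 1 [(2, WNode 3 [])])]" and ?s = "init_call [] []"
  have c: "exec ?L [(2, WNode 3 [])] Skip ?s ?s [] 1" by (rule exec.Skip)
  have call: "exec ?L ?ch (Call 5 1 1 []) ?s (setvar ?s 5 (aval (N 0) ?s)) [] (1+1)"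
    by (rule exec.Call[where C=D1 and ps="[]" and body=Skip and k=1 and ch'="[(2, WNode 3 [])]"])
      (use c in \<open>simp_all add: D1_def\<close>)
  have out: "exec ?L ?ch (Out (N 0)) (setvar ?s 5 (aval (N 0) ?s)) (setvar ?s 5 (aval (N 0) ?s)) [0] 1"
    using exec.Out[of ?L ?ch "N 0" "setvar ?s 5 (aval (N 0) ?s)"] by simp
  have "exec ?L ?ch (Seq (Call 5 1 1 []) (Out (N 0))) ?s (setvar ?s 5 (aval (N 0) ?s)) ([] @ [0]) (1 + 1 + 1 + 1)"
    by (rule exec.Seq[OF call out])
  then show ?thesis
    unfolding working_def R0_def run_def t1_def
    by (auto simp: Cc_def main_fn_def) (metis surj_pair)
qed

lemma valid_X: "env_computes_poly pe Env \<Longrightarrow> valid_inst Env (X p pe)"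
  unfolding valid_inst_def X_def
  using wf_libs0 main_ok0 wired_t1 working_t1 by (simp add: R0_def)


lemma wired_node: "wired L p t \<Longrightarrow> \<exists>k ch C. t = WNode k ch \<and> comp_of L k = Some C \<and> map fst ch = req C \<and>
   (\<forall>J t'. (J,t') \<in> set ch \<longrightarrow> wired L (k#p) t' \<and> (\<exists>C'. comp_of L (root_label t') = Some C' \<and> J \<in> set (prov C')))"
  by (cases rule: wired.cases) auto

lemma comp_of_Lc0_cases: "comp_of (Lc0 p pe) k = Some C \<Longrightarrow>
   (k = 0 \<and> C = Cc) \<or> (k = 1 \<and> C = D1) \<or> (k = 2 \<and> C = D2 p pe) \<or> (k = 3 \<and> C = D3)"
  using comp_of_Lc0_Some[of p pe k C] by (auto simp: Lc0_def Cc_def D1_def D2_def D3_def)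

lemma map_fst_single: "map fst ch = [a] \<Longrightarrow> \<exists>t. ch = [(a, t)]"
  by (cases ch) auto

lemma valid_cases: "valid_sys (Lc0 p pe) 0 t \<Longrightarrow> t = t1 \<or> t = t2"
proof -
  assume v: "valid_sys (Lc0 p pe) 0 t"
  then have w: "wired (Lc0 p pe) [] t" and r: "root_label t = 0" by (auto simp: valid_sys_def)
  from wired_node[OF w] obtain k ch C where t: "t = WNode k ch" and cC: "comp_of (Lc0 p pe) k = Some C"
    and mf: "map fst ch = req C" and chs: "\<forall>J t'. (J,t') \<in> set ch \<longrightarrow> wired (Lc0 p pe) (k#[]) t' \<and>
      (\<exists>C'. comp_of (Lc0 p pe) (root_label t') = Some C' \<and> J \<in> set (prov C'))" by blast
  from t r have k: "k = 0" by simp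
  with cC have "C = Cc" by simp
  with mf obtain t' where ch: "ch = [(1, t')]" using map_fst_single by (auto simp: Cc_def)
  with chs have w': "wired (Lc0 p pe) [0] t'" and "\<exists>C'. comp_of (Lc0 p pe) (root_label t') = Some C' \<and> 1 \<in> set (prov C')"
    using k by auto
  then obtain C' where cC': "comp_of (Lc0 p pe) (root_label t') = Some C'" and pC': "1 \<in> set (prov C')" by blast
  from wired_node[OF w'] obtain k' ch' C2 where t': "t' = WNode k' ch'" and cC2: "comp_of (Lc0 p pe) k' = Some C2"
    and mf': "map fst ch' = req C2" and chs': "\<forall>J t''. (J,t'') \<in> set ch' \<longrightarrow> wired (Lc0 p pe) (k'#[0]) t'' \<and>
      (\<exists>C'. comp_of (Lc0 p pe) (root_label t'') = Some C' \<and> J \<in> set (prov C'))" by blast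
  from cC' cC2 t' have C2: "C2 = C'" by simp
  from comp_of_Lc0_cases[OF cC2] pC' C2 have "(k' = 1 \<and> C2 = D1) \<or> (k' = 2 \<and> C2 = D2 p pe)"
    by (auto simp: Cc_def D3_def)
  then show ?thesis
  proof
    assume a: "k' = 1 \<and> C2 = D1"
    with mf' obtain t'' where ch': "ch' = [(2, t'')]" using map_fst_single by (auto simp: D1_def)
    with chs' have w'': "wired (Lc0 p pe) [k', 0] t''" and "\<exists>C'. comp_of (Lc0 p pe) (root_label t'') = Some C' \<and> 2 \<in> set (prov C')"
      by auto
    then obtain C3 where cC3: "comp_of (Lc0 p pe) (root_label t'') = Some C3" and pC3: "2 \<in> set (prov C3)" by blast
    from wired_node[OF w''] obtain k'' ch'' C4 where t'': "t'' = WNode k'' ch''" and cC4: "comp_of (Lc0 p pe) k'' = Some C4"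
      and mf'': "map fst ch'' = req C4" by blast
    from cC3 cC4 t'' have "C4 = C3" by simp
    with comp_of_Lc0_cases[OF cC4] pC3 have "k'' = 3 \<and> C4 = D3"
      by (auto simp: Cc_def D1_def D2_def)
    with mf'' have "ch'' = []" by (simp add: D3_def)
    with t t' t'' ch ch' k a `k'' = 3 \<and> C4 = D3` show ?thesis by (simp add: t1_def)
  next
    assume a: "k' = 2 \<and> C2 = D2 p pe"
    with mf' have "ch' = []" by (simp add: D2_def)
    with t t' ch k a show ?thesis by (simp add: t2_def)
  qed
qed


inductive_cases SeqE: "exec L ch (Seq c1 c2) s s' os n"
inductive_cases AssignE: "exec L ch (Assign x a) s s' os n"
inductive_cases IfE: "exec L ch (If b c1 c2) s s' os n"
inductive_cases CallE: "exec L ch (Call x I f args) s s' os n"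

lemma body2_state: "setvar (setvar (init_call [] []) 0 (aval (N (enc_com (B p pe))) (init_call [] []))) 0
    (aval (FE pe) (setvar (init_call [] []) 0 (aval (N (enc_com (B p pe))) (init_call [] []))))
  = alg_init (enc_inst (X p pe))"
  using quine[of pe "init_call [] []" p] by (simp add: setvar_def init_call_def alg_init_def)

lemma body2_runs:
  assumes ex: "exec L [] (strip p) (alg_init (enc_inst (X p pe))) s' [] n"
    and ne: "fst s' 1 \<noteq> enc_tree t2"
  shows "\<exists>s1 n'. exec L [] (body2 p pe) (init_call [] []) s1 [] n'"
proof -
  let ?s0 = "init_call [] []" and ?k = "N (enc_com (B p pe))"
  let ?sa = "setvar ?s0 0 (aval ?k ?s0)"
  let ?sb = "setvar ?sa 0 (aval (FE pe) ?sa)"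
  have a1: "exec L [] (Assign 0 ?k) ?s0 ?sa [] 1" by (rule exec.Assign)
  have a2: "exec L [] (Assign 0 (FE pe)) ?sa ?sb [] 1" by (rule exec.Assign)
  have ex': "exec L [] (strip p) ?sb s' [] n" using ex body2_state[of p pe] by simp
  have sk: "exec L [] Skip s' s' [] 1" by (rule exec.Skip)
  have i: "exec L [] (If (Eq (V 1) (N (enc_tree t2))) (While (BC True) Skip) Skip) s' s' [] (1 + 1)"
    by (rule exec.IfF[OF _ sk]) (use ne in simp)
  have sq: "exec L [] (Seq (strip p) (If (Eq (V 1) (N (enc_tree t2))) (While (BC True) Skip) Skip)) ?sb s' ([] @ []) (n + (1+1) + 1)"
    by (rule exec.Seq[OF ex' i])
  have Beq: "Seq (Assign 0 (FE pe)) (Seq (strip p) (If (Eq (V 1) (N (enc_tree t2))) (While (BC True) Skip) Skip)) = B p pe"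
    by (simp add: B_def)
  from exec.Seq[OF a2 sq] have "exec L [] (B p pe) ?sa s' ([] @ ([] @ [])) (1 + (n + (1+1) + 1) + 1)"
    by (simp only: Beq)
  then have "exec L [] (body2 p pe) ?s0 s' ([] @ ([] @ ([] @ []))) (1 + (1 + (n + (1+1) + 1) + 1) + 1)"
    unfolding body2_def by (rule exec.Seq[OF a1])
  then have "exec L [] (body2 p pe) ?s0 s' [] (1 + (1 + (n + (1+1) + 1) + 1) + 1)" by simp
  then show ?thesis by blast
qed

lemma body2_runs_inv:
  assumes ex: "exec L [] (strip p) (alg_init (enc_inst (X p pe))) s' [] n"
    and b: "exec L [] (body2 p pe) (init_call [] []) s1 os n1"
  shows "fst s' 1 \<noteq> enc_tree t2"
proof -
  let ?s0 = "init_call [] []" and ?k = "N (enc_com (B p pe))"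
  let ?sa = "setvar ?s0 0 (aval ?k ?s0)"
  let ?sb = "setvar ?sa 0 (aval (FE pe) ?sa)"
  from b obtain sx o1 m1 o2 m2 where e1: "exec L [] (Assign 0 ?k) ?s0 sx o1 m1"
    and e2: "exec L [] (B p pe) sx s1 o2 m2" unfolding body2_def by (blast elim: SeqE)
  from e1 have sx: "sx = ?sa" by (blast elim: AssignE)
  from e2 sx obtain sy o3 m3 o4 m4 where e3: "exec L [] (Assign 0 (FE pe)) ?sa sy o3 m3"
    and e4: "exec L [] (Seq (strip p) (If (Eq (V 1) (N (enc_tree t2))) (While (BC True) Skip) Skip)) sy s1 o4 m4"
    unfolding B_def by (blast elim: SeqE)
  from e3 have sy: "sy = alg_init (enc_inst (X p pe))" using body2_state[of p pe] by (blast elim: AssignE)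
  from e4 sy obtain sz o5 m5 o6 m6 where e5: "exec L [] (strip p) (alg_init (enc_inst (X p pe))) sz o5 m5"
    and e6: "exec L [] (If (Eq (V 1) (N (enc_tree t2))) (While (BC True) Skip) Skip) sz s1 o6 m6"
    by (blast elim: SeqE)
  from exec_det[OF ex e5] have "sz = s'" by simp
  with e6 show ?thesis
    by (auto elim!: IfE dest: exec_loop)
qed

lemma working_t2_D:
  "working (Lc0 p pe) R0 t2 \<Longrightarrow> (\<exists>s1 os n. exec (Lc0 p pe) [] (body2 p pe) (init_call [] []) s1 os n)"
proof -
  assume "working (Lc0 p pe) R0 t2"
  then have "run (Lc0 p pe) t2 [] [0]" by (simp add: working_def R0_def)
  then obtain C I ps body r s' n where cC: "comp_of (Lc0 p pe) 0 = Some C" and I: "I \<in> set (prov C)"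
    and m: "map_of (code C) (I, main_fn) = Some (ps, body, r)" and len: "length ps = 0"
    and e: "exec (Lc0 p pe) [(1, WNode 2 [])] body (init_call ps []) s' [0] n"
    unfolding run_def t2_def by auto
  from cC I m have "body = Seq (Call 5 1 1 []) (Out (N 0))" and "ps = []"
    by (auto simp: Cc_def main_fn_def)
  with e obtain sx o1 m1 where "exec (Lc0 p pe) [(1, WNode 2 [])] (Call 5 1 1 []) (init_call [] []) sx o1 m1"
    by (blast elim: SeqE)
  then obtain k ch' C ps body r s1 o1 n where a: "map_of [(1::nat, WNode 2 [])] 1 = Some (WNode k ch')"
    "comp_of (Lc0 p pe) k = Some C" "map_of (code C) (1,1) = Some (ps, body, r)"
    "exec (Lc0 p pe) ch' body (init_call ps (map (\<lambda>a. aval a (init_call [] [])) [])) s1 o1 n"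
    by (elim CallE) blast
  from a(1) have "k = 2" "ch' = []" by simp_all
  with a(2) have "C = D2 p pe" by simp
  with a(3) have "ps = []" "body = body2 p pe" by (simp_all add: D2_def)
  with a(4) `ch' = []` have "exec (Lc0 p pe) [] (body2 p pe) (init_call [] []) s1 o1 n"
    by simp
  then show "\<exists>s1 os n. exec (Lc0 p pe) [] (body2 p pe) (init_call [] []) s1 os n"
    by blast
qed

lemma working_t2_I:
  assumes c: "exec (Lc0 p pe) [] (body2 p pe) (init_call [] []) s1 [] n"
  shows "working (Lc0 p pe) R0 t2"
proof -
  let ?os = "[] :: nat list"
  let ?L = "Lc0 p pe" and ?ch = "[(1::nat, WNode 2 [])]" and ?s = "init_call [] []"
  have call: "exec ?L ?ch (Call 5 1 1 []) ?s (setvar ?s 5 (aval (N 0) s1)) ?os (n+1)"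
    by (rule exec.Call[where C="D2 p pe" and ps="[]" and body="body2 p pe" and k=2 and ch'="[]"])
      (use c in \<open>simp_all add: D2_def\<close>)
  have out: "exec ?L ?ch (Out (N 0)) (setvar ?s 5 (aval (N 0) s1)) (setvar ?s 5 (aval (N 0) s1)) [0] 1"
    using exec.Out[of ?L ?ch "N 0" "setvar ?s 5 (aval (N 0) s1)"] by simp
  have "exec ?L ?ch (Seq (Call 5 1 1 []) (Out (N 0))) ?s (setvar ?s 5 (aval (N 0) s1)) (?os @ [0]) (n + 1 + 1 + 1)"
    by (rule exec.Seq[OF call out])
  then show ?thesis
    unfolding working_def R0_def run_def t2_def
    by (auto simp: Cc_def main_fn_def) (metis surj_pair)
qed

theorem mainTheorem15:
  fixes Env :: "wtree \<Rightarrow> nat list"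
  assumes "env_polytime Env"
  shows "\<not> ESAdapt_ncomp_solvable Env"
proof
  assume sol: "ESAdapt_ncomp_solvable Env"
  from assms obtain pe where pe: "env_computes_poly pe Env" unfolding env_polytime_def by blast
  from sol obtain p where P: "\<forall>x. valid_inst Env x \<longrightarrow>
     (\<exists>n t. alg_runs p (enc_inst x) (enc_tree t) n \<and> optimal_ncomp x t)"
    unfolding ESAdapt_ncomp_solvable_def by blast
  obtain n t where rn: "alg_runs p (enc_inst (X p pe)) (enc_tree t) n" and opt: "optimal_ncomp (X p pe) t"
    using P valid_X[OF pe, of p] by blast
  from rn obtain s' os where ex: "exec [] [] p (alg_init (enc_inst (X p pe))) s' os n"
    and o: "fst s' 1 = enc_tree t" unfolding alg_runs_def by blast
  have ex2: "exec (Lc0 p pe) [] (strip p) (alg_init (enc_inst (X p pe))) s' [] n"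
    using exec_strip[OF ex] by simp
  from opt have vt: "valid_sys (Lc0 p pe) 0 t" and wt: "working (Lc0 p pe) R0 t"
    and mn: "\<And>t'. valid_sys (Lc0 p pe) 0 t' \<Longrightarrow> working (Lc0 p pe) R0 t' \<Longrightarrow> ncomp t \<le> ncomp t'"
    unfolding optimal_ncomp_def X_def by auto
  have tt: "t = t1 \<or> t = t2" using valid_cases[OF vt] .
  have ne12: "enc_tree t1 \<noteq> enc_tree t2" by (simp add: t1_def t2_def list_encode_eq)
  show False
  proof (cases "fst s' 1 = enc_tree t2")
    case True
    have "\<not> working (Lc0 p pe) R0 t2"
      using working_t2_D body2_runs_inv[OF ex2] True by blast
    with wt tt have "t = t1" by blast
    with o True ne12 show False by simp
  next
    case False
    from body2_runs[OF ex2 False] obtain s1 n' where "exec (Lc0 p pe) [] (body2 p pe) (init_call [] []) s1 [] n'" by blast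
    then have "working (Lc0 p pe) R0 t2" by (rule working_t2_I)
    with mn wired_t2 have "ncomp t \<le> ncomp t2" by blast
    then have "t \<noteq> t1" by (auto simp: t1_def t2_def)
    with tt have "t = t2" by blast
    with o False show False by simp
  qed
qed

end
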